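(* Let $E$ be a real Hilbert space with $\dim(E)\ge2$, $h\in E$ a unit vector, and $f:\mathbb{R}_{\ge0}\to\mathbb{R}_{\ge0}$ with $f(d)=0$ iff $d=0$. Let $x\preceq_f y\iff f(\|y_\perp-x_\perp\|)\le y_h-x_h$, and assume $(E,\preceq_f)$ is a sponge. Then $f(d)+f(e)\le\max(f(d+e),f(|d-e|))$ for all $d,e\in\mathbb{R}_{\ge0}$. If $\dim(E)\ge3$, then $f$ is square-superadditive, i.e. $f(\sqrt{d^2+e^2})\ge f(d)+f(e)$ for all $d,e\ge0$.
   Context: For $x\in E$ write $x=x_h h+x_\perp$ with $x_h=(x,h)$ and $x_\perp$ orthogonal to $h$. An oriented set $(S,\preceq)$ (with $\preceq$ reflexive and antisymmetric) is a sponge if every finite, nonempty, right-bounded subset has a join and every finite, nonempty, left-bounded subset has a meet. Here $P$ is right-bounded if some $s$ has $p\preceq s$ for all $p\in P$; the join of $P$ is an $x$ with $p\preceq x$ for all $p\in P$ and $x\preceq y$ whenever $p\preceq y$ for all $p\in P$; left-bounded and meet are defined dually. *)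

theory Defs
  imports "HOL-Analysis.Analysis"
begin

definition is_join :: "('a \<Rightarrow> 'a \<Rightarrow> bool) \<Rightarrow> 'a set \<Rightarrow> 'a \<Rightarrow> bool" where
  "is_join le P x \<longleftrightarrow> (\<forall>p\<in>P. le p x) \<and> (\<forall>y. (\<forall>p\<in>P. le p y) \<longrightarrow> le x y)"

definition is_meet :: "('a \<Rightarrow> 'a \<Rightarrow> bool) \<Rightarrow> 'a set \<Rightarrow> 'a \<Rightarrow> bool" where
  "is_meet le P x \<longleftrightarrow> (\<forall>p\<in>P. le x p) \<and> (\<forall>y. (\<forall>p\<in>P. le y p) \<longrightarrow> le y x)"

definition sponge :: "('a \<Rightarrow> 'a \<Rightarrow> bool) \<Rightarrow> bool" where
  "sponge le \<longleftrightarrow>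
     (\<forall>x. le x x) \<and> (\<forall>x y. le x y \<and> le y x \<longrightarrow> x = y) \<and>
     (\<forall>P. finite P \<and> P \<noteq> {} \<and> (\<exists>s. \<forall>p\<in>P. le p s) \<longrightarrow> (\<exists>x. is_join le P x)) \<and>
     (\<forall>P. finite P \<and> P \<noteq> {} \<and> (\<exists>s. \<forall>p\<in>P. le s p) \<longrightarrow> (\<exists>x. is_meet le P x))"

definition perp :: "'a::real_inner \<Rightarrow> 'a \<Rightarrow> 'a" where
  "perp h x = x - (x \<bullet> h) *\<^sub>R h"

definition cone_le :: "(real \<Rightarrow> real) \<Rightarrow> 'a::real_inner \<Rightarrow> 'a \<Rightarrow> 'a \<Rightarrow> bool" where
  "cone_le f h x y \<longleftrightarrow> f (norm (perp h y - perp h x)) \<le> y \<bullet> h - x \<bullet> h"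

text \<open>dim(E) >= n: there exist n linearly independent vectors (covers infinite dimension).\<close>
definition dim_ge :: "'a::real_vector itself \<Rightarrow> nat \<Rightarrow> bool" where
  "dim_ge _ n \<longleftrightarrow> (\<exists>B::'a set. finite B \<and> card B = n \<and> independent B)"

end

theory Submission
  imports Defs
begin

lemma join_unique:
  assumes "sponge le" "is_join le P x" "is_join le P y"
  shows "x = y"
proof -
  have a: "\<forall>x y. le x y \<and> le y x \<longrightarrow> x = y" using assms(1) unfolding sponge_def by blast
  have "le x y" using assms(2,3) unfolding is_join_def by blast
  moreover have "le y x" using assms(2,3) unfolding is_join_def by blast
  ultimately show ?thesis using a by blast
qed

lemma join_sym:
  assumes ord: "\<And>x y. le (\<sigma> x) (\<sigma> y) = le x y"
    and inv: "\<And>x. \<sigma> (\<sigma> x) = x"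
    and PP: "\<And>p. p \<in> P \<Longrightarrow> \<sigma> p \<in> P"
    and J: "is_join le P J"
  shows "is_join le P (\<sigma> J)"
  unfolding is_join_def
proof safe
  fix p assume p: "p \<in> P"
  then have "le (\<sigma> p) J" using J PP unfolding is_join_def by blast
  then have "le (\<sigma> (\<sigma> p)) (\<sigma> J)" using ord by simp
  then show "le p (\<sigma> J)" using inv by simp
next
  fix y assume y: "\<forall>p\<in>P. le p y"
  have "\<forall>p\<in>P. le p (\<sigma> y)"
  proof
    fix p assume "p \<in> P"
    then have "le (\<sigma> p) y" using y PP by blast
    then have "le (\<sigma> (\<sigma> p)) (\<sigma> y)" using ord by simp
    then show "le p (\<sigma> y)" using inv by simp
  qed
  then have "le J (\<sigma> y)" using J unfolding is_join_def by blast
  then have "le (\<sigma> J) (\<sigma> (\<sigma> y))" using ord by simp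
  then show "le (\<sigma> J) y" using inv by simp
qed

definition rfl :: "'a::real_inner \<Rightarrow> 'a \<Rightarrow> 'a" where
  "rfl w x = x - (2 * (x \<bullet> w)) *\<^sub>R w"

lemma rfl_inv: "norm w = 1 \<Longrightarrow> rfl w (rfl w x) = x"
proof -
  assume "norm w = 1"
  then have ww: "w \<bullet> w = 1" by (metis norm_eq_1)
  have yw: "rfl w x \<bullet> w = - (x \<bullet> w)" unfolding rfl_def
    by (simp only: inner_diff_left inner_scaleR_left ww)
  have "rfl w (rfl w x) = rfl w x - (2 * (rfl w x \<bullet> w)) *\<^sub>R w" by (rule rfl_def)
  also have "\<dots> = rfl w x + (2 * (x \<bullet> w)) *\<^sub>R w" using yw by simp
  also have "\<dots> = x" unfolding rfl_def by simp
  finally show ?thesis .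
qed

lemma rfl_norm: "norm w = 1 \<Longrightarrow> norm (rfl w x) = norm x"
proof -
  assume "norm w = 1"
  then have ww: "w \<bullet> w = 1" by (metis norm_eq_1)
  have c: "w \<bullet> x = x \<bullet> w" by (rule inner_commute)
  have "(rfl w x) \<bullet> (rfl w x) = x \<bullet> x - 4 * (x \<bullet> w)^2 + 4 * (x \<bullet> w)^2 * (w \<bullet> w)" unfolding rfl_def
    by (simp add: inner_diff_left inner_diff_right c power2_eq_square algebra_simps)
  then have "(rfl w x) \<bullet> (rfl w x) = x \<bullet> x" using ww by simp
  then show ?thesis by (simp add: norm_eq_sqrt_inner)
qed

lemma rfl_h: "w \<bullet> h = 0 \<Longrightarrow> (rfl w x) \<bullet> h = x \<bullet> h"
  unfolding rfl_def by (simp add: inner_diff_left)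

lemma rfl_perp: "w \<bullet> h = 0 \<Longrightarrow> perp h (rfl w x) = rfl w (perp h x)"
proof -
  assume wh: "w \<bullet> h = 0"
  have hw: "h \<bullet> w = 0" using wh by (simp add: inner_commute)
  have pw: "perp h x \<bullet> w = x \<bullet> w" unfolding perp_def
    by (simp add: inner_diff_left hw)
  have "perp h (rfl w x) = rfl w x - (x \<bullet> h) *\<^sub>R h"
    unfolding perp_def rfl_h[OF wh] by (rule refl)
  also have "\<dots> = rfl w (perp h x)"
    unfolding rfl_def pw unfolding perp_def by simp
  finally show ?thesis .
qed

lemma rfl_diff: "rfl w y - rfl w x = rfl w (y - x)"
  unfolding rfl_def by (simp add: inner_diff_left scaleR_diff_left scaleR_diff_right algebra_simps)

lemma rfl_cone:
  assumes "norm w = 1" "w \<bullet> h = 0"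
  shows "cone_le f h (rfl w x) (rfl w y) = cone_le f h x y"
  unfolding cone_le_def rfl_h[OF assms(2)] rfl_perp[OF assms(2)] rfl_diff rfl_norm[OF assms(1)]
  by (rule refl)

lemma exists_outside:
  fixes S :: "'a::real_vector set"
  assumes "dim_ge TYPE('a) n" "finite S" "card S < n"
  shows "\<exists>x. x \<notin> span S"
proof (rule ccontr)
  assume "\<not> ?thesis"
  then have all: "B \<subseteq> span S" for B by blast
  obtain B :: "'a set" where B: "finite B" "card B = n" "independent B"
    using assms(1) unfolding dim_ge_def by blast
  have "card B \<le> card S"
    using independent_span_bound[OF assms(2) B(3) all] by blast
  then show False using B assms by simp
qed


lemma key:
  fixes h u :: "'a::real_inner" and f :: "real \<Rightarrow> real"
  assumes unit: "norm h = 1" and uu: "norm u = 1" and uh: "u \<bullet> h = 0"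
    and f0: "f 0 = 0"
    and sp: "sponge (cone_le f h)"
    and c: "c \<ge> 0" and yh: "y \<bullet> h = 0"
  shows "f (norm y) + f c \<le> max (f (norm (y + c *\<^sub>R u))) (f (norm (y - c *\<^sub>R u)))"
proof -
  let ?le = "cone_le f h"
  define A where "A = (-c) *\<^sub>R u"
  define B where "B = c *\<^sub>R u"
  define s0 where "s0 = f c *\<^sub>R h"
  have hh: "h \<bullet> h = 1" using unit by (metis norm_eq_1)
  have uuu: "u \<bullet> u = 1" using uu by (metis norm_eq_1)
  have hu: "h \<bullet> u = 0" using uh by (simp add: inner_commute)
  have pA: "perp h A = A" "A \<bullet> h = 0" unfolding perp_def A_def using uh by auto
  have pB: "perp h B = B" "B \<bullet> h = 0" unfolding perp_def B_def using uh by auto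
  have ps0: "perp h s0 = 0" "s0 \<bullet> h = f c" unfolding perp_def s0_def using hh by auto
  have nA: "norm A = c" "norm B = c" unfolding A_def B_def using uu c by auto
  have bnd: "\<forall>p\<in>{A,B}. ?le p s0"
    using pA pB ps0 nA unfolding cone_le_def by auto
  have spj: "\<forall>P. finite P \<and> P \<noteq> {} \<and> (\<exists>s. \<forall>p\<in>P. ?le p s) \<longrightarrow> (\<exists>x. is_join ?le P x)"
    using sp unfolding sponge_def by blast
  have fin: "finite {A,B}" "{A,B} \<noteq> {}" by auto
  obtain J where J: "is_join ?le {A,B} J"
    using spj fin bnd by blast
  have rA: "rfl u A = B" "rfl u B = A" unfolding rfl_def A_def B_def using uuu
    by (simp_all add: algebra_simps scaleR_2[symmetric] del: scaleR_2)
  have "is_join ?le {A,B} (rfl u J)"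
    by (rule join_sym[OF rfl_cone[OF uu uh] rfl_inv[OF uu] _ J]) (use rA in auto)
  then have "rfl u J = J" using join_unique[OF sp] J by blast
  then have "(2 * (J \<bullet> u)) *\<^sub>R u = 0" unfolding rfl_def by (simp add: algebra_simps)
  then have Ju: "J \<bullet> u = 0" using uu by auto
  have pJ: "perp h J = 0"
  proof (rule ccontr)
    assume ne: "perp h J \<noteq> 0"
    define r where "r = perp h J /\<^sub>R norm (perp h J)"
    have rn: "norm r = 1" using ne unfolding r_def by simp
    have pJh: "perp h J \<bullet> h = 0" unfolding perp_def using hh by (simp add: inner_diff_left)
    have pJu: "perp h J \<bullet> u = 0" unfolding perp_def using Ju hu by (simp add: inner_diff_left)
    have rh: "r \<bullet> h = 0" using pJh unfolding r_def by simp
    have ru: "u \<bullet> r = 0" using pJu unfolding r_def by (simp add: inner_commute)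
    have rA2: "rfl r A = A" "rfl r B = B" unfolding rfl_def A_def B_def using ru
      by (simp_all add: inner_commute)
    have "is_join ?le {A,B} (rfl r J)"
      by (rule join_sym[OF rfl_cone[OF rn rh] rfl_inv[OF rn] _ J]) (use rA2 in auto)
    then have "rfl r J = J" using join_unique[OF sp] J by blast
    then have "(2 * (J \<bullet> r)) *\<^sub>R r = 0" unfolding rfl_def by (simp add: algebra_simps)
    then have Jr: "J \<bullet> r = 0" using rn by auto
    have Jd: "J = perp h J + (J \<bullet> h) *\<^sub>R h" unfolding perp_def by simp
    have hp: "h \<bullet> perp h J = 0" using pJh by (simp add: inner_commute)
    have "J \<bullet> perp h J = perp h J \<bullet> perp h J"
      by (subst Jd) (simp add: inner_add_left hp)
    moreover have "J \<bullet> perp h J = 0" using Jr ne unfolding r_def by simp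
    ultimately show False using ne by simp
  qed
  define t where "t = J \<bullet> h"
  have AJ: "?le A J" using J unfolding is_join_def by simp
  have Js0: "?le J s0" using J bnd unfolding is_join_def by blast
  have t1: "f c \<le> t" using AJ pJ pA nA unfolding cone_le_def t_def by simp
  have t2: "0 \<le> f c - t" using Js0 pJ ps0 f0 unfolding cone_le_def t_def by simp
  define m where "m = max (f (norm (y + c *\<^sub>R u))) (f (norm (y - c *\<^sub>R u)))"
  define Y where "Y = y + m *\<^sub>R h"
  have pY: "perp h Y = y" "Y \<bullet> h = m" unfolding Y_def perp_def using yh hh
    by (simp_all add: inner_add_left)
  have "\<forall>p\<in>{A,B}. ?le p Y"
    using pY pA pB unfolding cone_le_def m_def A_def B_def by auto
  then have "?le J Y" using J unfolding is_join_def by blast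
  then have "f (norm y) \<le> m - t" using pY pJ unfolding cone_le_def t_def by simp
  then show ?thesis using t1 t2 unfolding m_def by linarith
qed

lemma unit_perp:
  fixes h :: "'a::real_inner"
  assumes "dim_ge TYPE('a) 2" "norm h = 1"
  shows "\<exists>u. norm u = 1 \<and> u \<bullet> h = 0"
proof -
  obtain x :: 'a where x: "x \<notin> span {h}" using exists_outside[OF assms(1)] by fastforce
  have hh: "h \<bullet> h = 1" using assms(2) by (metis norm_eq_1)
  define v where "v = x - (x \<bullet> h) *\<^sub>R h"
  have "v \<noteq> 0"
  proof
    assume "v = 0"
    then have "x = (x \<bullet> h) *\<^sub>R h" unfolding v_def by simp
    then have "x \<in> span {h}" by (metis span_base span_scale singletonI)
    then show False using x by simp
  qed
  moreover have "v \<bullet> h = 0" unfolding v_def using hh by (simp add: inner_diff_left)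
  ultimately show ?thesis by (intro exI[of _ "v /\<^sub>R norm v"]) simp
qed

lemma unit_perp2:
  fixes h :: "'a::real_inner"
  assumes "dim_ge TYPE('a) 3" "norm h = 1" "norm u = 1" "u \<bullet> h = 0"
  shows "\<exists>w. norm w = 1 \<and> w \<bullet> h = 0 \<and> w \<bullet> u = 0"
proof -
  have "card {h, u} < 3" by (simp add: card_insert_if)
  then obtain x :: 'a where x: "x \<notin> span {h, u}" using exists_outside[OF assms(1)] by fastforce
  have hh: "h \<bullet> h = 1" using assms(2) by (metis norm_eq_1)
  have uu: "u \<bullet> u = 1" using assms(3) by (metis norm_eq_1)
  have hu: "h \<bullet> u = 0" using assms(4) by (simp add: inner_commute)
  define v where "v = x - (x \<bullet> h) *\<^sub>R h - (x \<bullet> u) *\<^sub>R u"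
  have "v \<noteq> 0"
  proof
    assume "v = 0"
    then have "x = (x \<bullet> h) *\<^sub>R h + (x \<bullet> u) *\<^sub>R u" unfolding v_def by (simp add: algebra_simps)
    moreover have "(x \<bullet> h) *\<^sub>R h + (x \<bullet> u) *\<^sub>R u \<in> span {h, u}"
      by (intro span_add span_scale span_base) auto
    ultimately show False using x by simp
  qed
  moreover have "v \<bullet> h = 0" unfolding v_def using hh assms(4) by (simp add: inner_diff_left)
  moreover have "v \<bullet> u = 0" unfolding v_def using uu hu by (simp add: inner_diff_left)
  ultimately show ?thesis by (intro exI[of _ "v /\<^sub>R norm v"]) simp
qed

theorem mainTheorem15:
  fixes h :: "'a::{real_inner, complete_space}" and f :: "real \<Rightarrow> real"
  assumes dim2: "dim_ge TYPE('a) 2"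
    and unit: "norm h = 1"
    and fnonneg: "\<forall>d\<ge>0. f d \<ge> 0"
    and fzero: "\<forall>d\<ge>0. f d = 0 \<longleftrightarrow> d = 0"
    and sp: "sponge (cone_le f h)"
  shows "(\<forall>d\<ge>0. \<forall>e\<ge>0. f d + f e \<le> max (f (d + e)) (f \<bar>d - e\<bar>))
       \<and> (dim_ge TYPE('a) 3 \<longrightarrow> (\<forall>d\<ge>0. \<forall>e\<ge>0. f (sqrt (d\<^sup>2 + e\<^sup>2)) \<ge> f d + f e))"
proof
  have f0: "f 0 = 0" using fzero by simp
  obtain u where u: "norm u = 1" "u \<bullet> h = 0" using unit_perp[OF dim2 unit] by blast
  have uu: "u \<bullet> u = 1" using u(1) by (metis norm_eq_1)
  show "\<forall>d\<ge>0. \<forall>e\<ge>0. f d + f e \<le> max (f (d + e)) (f \<bar>d - e\<bar>)"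
  proof (intro allI impI)
    fix d e :: real assume d: "d \<ge> 0" and e: "e \<ge> 0"
    have yh: "(e *\<^sub>R u) \<bullet> h = 0" using u by simp
    have k: "f (norm (e *\<^sub>R u)) + f d \<le> max (f (norm (e *\<^sub>R u + d *\<^sub>R u))) (f (norm (e *\<^sub>R u - d *\<^sub>R u)))"
      by (rule key[OF unit u(1) u(2) f0 sp d yh])
    have n1: "norm (e *\<^sub>R u) = e" using u e by simp
    have n2: "norm (e *\<^sub>R u + d *\<^sub>R u) = d + e"
      by (simp add: scaleR_left_distrib[symmetric] u d e)
    have n3: "norm (e *\<^sub>R u - d *\<^sub>R u) = \<bar>d - e\<bar>"
      by (simp add: scaleR_diff_left[symmetric] u abs_minus_commute)
    show "f d + f e \<le> max (f (d + e)) (f \<bar>d - e\<bar>)" using k n1 n2 n3 by simp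
  qed
  show "dim_ge TYPE('a) 3 \<longrightarrow> (\<forall>d\<ge>0. \<forall>e\<ge>0. f (sqrt (d\<^sup>2 + e\<^sup>2)) \<ge> f d + f e)"
  proof (intro impI)
    assume dim3: "dim_ge TYPE('a) 3"
    obtain w where w: "norm w = 1" "w \<bullet> h = 0" "w \<bullet> u = 0"
      using unit_perp2[OF dim3 unit u] by blast
    have ww: "w \<bullet> w = 1" using w(1) by (metis norm_eq_1)
    have uw: "u \<bullet> w = 0" using w(3) by (simp add: inner_commute)
    show "\<forall>d\<ge>0. \<forall>e\<ge>0. f (sqrt (d\<^sup>2 + e\<^sup>2)) \<ge> f d + f e"
    proof (intro allI impI)
      fix d e :: real
      assume d: "d \<ge> 0" and e: "e \<ge> 0"
      have yh: "(e *\<^sub>R w) \<bullet> h = 0" using w by simp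
      have k: "f (norm (e *\<^sub>R w)) + f d \<le> max (f (norm (e *\<^sub>R w + d *\<^sub>R u))) (f (norm (e *\<^sub>R w - d *\<^sub>R u)))"
        by (rule key[OF unit u(1) u(2) f0 sp d yh])
      have n1: "norm (e *\<^sub>R w) = e" using w e by simp
      have "(e *\<^sub>R w + d *\<^sub>R u) \<bullet> (e *\<^sub>R w + d *\<^sub>R u) = d\<^sup>2 + e\<^sup>2"
        by (simp add: inner_add_left inner_add_right ww uu uw w(3) power2_eq_square)
      then have n2: "norm (e *\<^sub>R w + d *\<^sub>R u) = sqrt (d\<^sup>2 + e\<^sup>2)" by (simp add: norm_eq_sqrt_inner)
      have "(e *\<^sub>R w - d *\<^sub>R u) \<bullet> (e *\<^sub>R w - d *\<^sub>R u) = d\<^sup>2 + e\<^sup>2"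
        by (simp add: inner_diff_left inner_diff_right ww uu uw w(3) power2_eq_square)
      then have n3: "norm (e *\<^sub>R w - d *\<^sub>R u) = sqrt (d\<^sup>2 + e\<^sup>2)" by (simp add: norm_eq_sqrt_inner)
      show "f (sqrt (d\<^sup>2 + e\<^sup>2)) \<ge> f d + f e" using k n1 n2 n3 by simp
    qed
  qed
qed

end
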